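(* Let $G$ be a $c$-edge-colored multigraph (without loops) with $n$ vertices such that every vertex is incident to at least two edges of different colors. Suppose at least one vertex is incident to at least three edges of pairwise different colors, and that $\delta_{dym}(x)+\delta_{dym}(y)\ge n+1$ for every pair of distinct vertices $x,y$. Then $G$ has a properly colored hamiltonian cycle.
   Context: A $c$-edge-colored multigraph is a finite multigraph without loops (parallel edges allowed) together with a map $\phi:E(G)\to\{1,\ldots,c\}$. For $u,v\in V(G)$, $E_{uv}$ is the set of edges with end vertices $u$ and $v$. Here $\delta_{dym}(x)$ is the number of vertices $y$ such that $E_{xy}$ contains two edges of different colors. A properly colored (PC) hamiltonian cycle is a cyclic sequence $(x_1,f_1,x_2,f_2,\ldots,x_n,f_n,x_1)$ containing every vertex exactly once, with $f_i\in E_{x_ix_{i+1}}$ (indices mod $n$), such that any two consecutive edges, including $f_n$ and $f_1$, have different colors. *)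

theory Defs
  imports Main
begin

text \<open>A c-edge-colored multigraph without loops: finite vertex set V, finite edge set E
 (edges are abstract objects, so parallel edges are allowed), each edge has a set of two
 distinct end vertices, and a colouring phi with values in {1..c}.\<close>

definition colored_multigraph ::
  "'v set \<Rightarrow> 'e set \<Rightarrow> ('e \<Rightarrow> 'v set) \<Rightarrow> nat \<Rightarrow> ('e \<Rightarrow> nat) \<Rightarrow> bool" where
  "colored_multigraph V E ends c phi \<longleftrightarrow>
     finite V \<and> finite E \<and>
     (\<forall>e\<in>E. \<exists>u v. u \<noteq> v \<and> u \<in> V \<and> v \<in> V \<and> ends e = {u, v}) \<and>
     (\<forall>e\<in>E. phi e \<in> {1..c})"

definition edges_between :: "'e set \<Rightarrow> ('e \<Rightarrow> 'v set) \<Rightarrow> 'v \<Rightarrow> 'v \<Rightarrow> 'e set" where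
  "edges_between E ends u v = {e \<in> E. ends e = {u, v}}"

definition incident_edges :: "'e set \<Rightarrow> ('e \<Rightarrow> 'v set) \<Rightarrow> 'v \<Rightarrow> 'e set" where
  "incident_edges E ends x = {e \<in> E. x \<in> ends e}"

definition delta_dym :: "'v set \<Rightarrow> 'e set \<Rightarrow> ('e \<Rightarrow> 'v set) \<Rightarrow> ('e \<Rightarrow> nat) \<Rightarrow> 'v \<Rightarrow> nat" where
  "delta_dym V E ends phi x =
     card {y \<in> V. \<exists>e\<in>edges_between E ends x y. \<exists>f\<in>edges_between E ends x y. phi e \<noteq> phi f}"

text \<open>A properly coloured hamiltonian cycle (x_1,f_1,...,x_n,f_n,x_1), indices mod n.\<close>
definition PC_ham_cycle ::
  "'v set \<Rightarrow> 'e set \<Rightarrow> ('e \<Rightarrow> 'v set) \<Rightarrow> ('e \<Rightarrow> nat) \<Rightarrow> 'v list \<Rightarrow> 'e list \<Rightarrow> bool" where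
  "PC_ham_cycle V E ends phi xs fs \<longleftrightarrow>
     (let n = length xs in
       distinct xs \<and> set xs = V \<and> length fs = n \<and>
       (\<forall>i<n. fs ! i \<in> edges_between E ends (xs ! i) (xs ! ((i + 1) mod n))) \<and>
       (\<forall>i<n. phi (fs ! i) \<noteq> phi (fs ! ((i + 1) mod n))))"

definition has_PC_ham_cycle ::
  "'v set \<Rightarrow> 'e set \<Rightarrow> ('e \<Rightarrow> 'v set) \<Rightarrow> ('e \<Rightarrow> nat) \<Rightarrow> bool" where
  "has_PC_ham_cycle V E ends phi \<longleftrightarrow> (\<exists>xs fs. PC_ham_cycle V E ends phi xs fs)"

end

theory Submission
  imports Defs
begin


fun pedges :: "'a list \<Rightarrow> 'a set set" where
  "pedges (x # y # zs) = insert {x,y} (pedges (y # zs))"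
| "pedges _ = {}"

definition cedges :: "'a list \<Rightarrow> 'a set set" where
  "cedges xs = (if xs = [] then {} else insert {last xs, hd xs} (pedges xs))"

lemma pedges_Cons: "pedges (x # ys) = (if ys = [] then {} else insert {x, hd ys} (pedges ys))"
  by (cases ys) auto

lemma pedges_append:
  "pedges (xs @ ys) = pedges xs \<union> pedges ys \<union> (if xs = [] \<or> ys = [] then {} else {{last xs, hd ys}})"
proof (induction xs)
  case Nil then show ?case by simp
next
  case (Cons x xs)
  show ?case
  proof (cases xs)
    case Nil then show ?thesis by (simp add: pedges_Cons)
  next
    case (Cons a as)
    then show ?thesis using Cons.IH by (auto simp: pedges_Cons)
  qed
qed

lemma pedges_rev: "pedges (rev xs) = pedges xs"
proof (induction xs)
  case Nil then show ?case by simp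
next
  case (Cons x xs)
  then show ?case by (auto simp: pedges_append pedges_Cons hd_rev last_rev insert_commute)
qed

lemma cedges_rotate1: "cedges (rotate1 xs) = cedges xs"
proof (cases xs)
  case Nil then show ?thesis by simp
next
  case (Cons x ys)
  then show ?thesis
    by (cases "ys = []") (auto simp: cedges_def pedges_append pedges_Cons insert_commute)
qed

lemma cedges_rotate: "cedges (rotate k xs) = cedges xs"
  by (induction k) (auto simp: rotate_Suc cedges_rotate1)

lemma cedges_rev: "cedges (rev xs) = cedges xs"
  by (auto simp: cedges_def pedges_rev hd_rev last_rev)

lemma pedges_nth: "pedges xs = {{xs!i, xs!Suc i} | i. Suc i < length xs}"
proof (induction xs rule: pedges.induct)
  case (1 x y zs)
  have "{{(x#y#zs)!i, (x#y#zs)!Suc i} | i. Suc i < length (x#y#zs)}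
        = insert {x,y} {{(y#zs)!i, (y#zs)!Suc i} | i. Suc i < length (y#zs)}"
    (is "?L = ?R")
  proof
    show "?L \<subseteq> ?R"
    proof
      fix e assume "e \<in> ?L"
      then obtain i where e: "e = {(x#y#zs)!i, (x#y#zs)!Suc i}" "Suc i < length (x#y#zs)" by blast
      show "e \<in> ?R"
      proof (cases i)
        case 0 then show ?thesis using e by simp
      next
        case (Suc j) then show ?thesis using e by auto
      qed
    qed
  next
    show "?R \<subseteq> ?L"
    proof
      fix e assume "e \<in> ?R"
      then consider "e = {x,y}" | j where "e = {(y#zs)!j, (y#zs)!Suc j}" "Suc j < length (y#zs)" by blast
      then show "e \<in> ?L"
      proof cases
        case 1 then show ?thesis by (auto intro!: exI[of _ 0])
      next
        case 2 then show ?thesis by (auto intro!: exI[of _ "Suc j"])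
      qed
    qed
  qed
  then show ?case using 1 by simp
qed auto

lemma cedges_nth:
  assumes "xs \<noteq> []"
  shows "cedges xs = {{xs!i, xs!(Suc i mod length xs)} | i. i < length xs}"
proof -
  let ?n = "length xs"
  have "cedges xs = insert {last xs, hd xs} {{xs!i, xs!Suc i} | i. Suc i < ?n}"
    using assms by (simp add: cedges_def pedges_nth)
  also have "\<dots> = {{xs!i, xs!(Suc i mod ?n)} | i. i < ?n}" (is "?L = ?R")
  proof
    show "?L \<subseteq> ?R"
    proof
      fix e assume "e \<in> ?L"
      then consider "e = {last xs, hd xs}" | i where "e = {xs!i, xs!Suc i}" "Suc i < ?n" by blast
      then show "e \<in> ?R"
      proof cases
        case 1
        have "e = {xs!(?n - 1), xs!(Suc (?n - 1) mod ?n)}"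
          using 1 assms by (simp add: last_conv_nth hd_conv_nth)
        moreover have "?n - 1 < ?n" using assms by simp
        ultimately show ?thesis by blast
      next
        case 2 then show ?thesis by force
      qed
    qed
  next
    show "?R \<subseteq> ?L"
    proof
      fix e assume "e \<in> ?R"
      then obtain i where i: "e = {xs!i, xs!(Suc i mod ?n)}" "i < ?n" by blast
      show "e \<in> ?L"
      proof (cases "Suc i < ?n")
        case True then show ?thesis using i by auto
      next
        case False
        then have "Suc i = ?n" using i by simp
        then have "i = ?n - 1" by simp
        then have "e = {last xs, hd xs}" using i assms \<open>Suc i = ?n\<close>
          by (simp add: last_conv_nth hd_conv_nth)
        then show ?thesis by simp
      qed
    qed
  qed
  finally show ?thesis .
qed

lemma pedges_subset: "e \<in> pedges xs \<Longrightarrow> e \<subseteq> set xs"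
  by (induction xs rule: pedges.induct) auto

lemma cedges_subset: "e \<in> cedges xs \<Longrightarrow> e \<subseteq> set xs"
  by (auto simp: cedges_def dest: pedges_subset split: if_splits)

lemma cedges_elem:
  assumes "distinct xs" "length xs \<ge> 2" "e \<in> cedges xs"
  shows "\<exists>a b. a \<noteq> b \<and> a \<in> set xs \<and> b \<in> set xs \<and> e = {a,b}"
proof -
  have ne: "xs \<noteq> []" using assms by auto
  obtain i where i: "e = {xs!i, xs!(Suc i mod length xs)}" "i < length xs"
    using assms(3) cedges_nth[OF ne] by blast
  have "Suc i mod length xs \<noteq> i"
  proof (cases "Suc i < length xs")
    case True then show ?thesis by simp
  next
    case False then have "Suc i = length xs" using i(2) by simp
    then show ?thesis using assms(2) by simp
  qed
  then have "xs!i \<noteq> xs!(Suc i mod length xs)"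
    using assms(1) i(2) ne by (simp add: nth_eq_iff_index_eq)
  moreover have "Suc i mod length xs < length xs" using ne by simp
  ultimately show ?thesis using i
    by (intro exI[of _ "xs!i"] exI[of _ "xs!(Suc i mod length xs)"]) auto
qed



definition deg :: "'a set \<Rightarrow> 'a set set \<Rightarrow> 'a \<Rightarrow> nat" where
  "deg V F u = card {w\<in>V. {u,w} \<in> F}"

definition hc :: "'a set \<Rightarrow> 'a set set \<Rightarrow> 'a list \<Rightarrow> bool" where
  "hc V F xs \<longleftrightarrow> distinct xs \<and> set xs = V \<and> cedges xs \<subseteq> F"

lemma rotate_to:
  assumes "distinct xs" "x \<in> set xs"
  shows "\<exists>zs. distinct (x # zs) \<and> set (x # zs) = set xs \<and> cedges (x # zs) = cedges xs
            \<and> length (x # zs) = length xs"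
proof -
  obtain k where k: "k < length xs" "xs ! k = x" using assms(2) by (meson in_set_conv_nth)
  let ?r = "rotate k xs"
  have ne: "?r \<noteq> []" using k by auto
  have ne0: "xs \<noteq> []" using k by auto
  have "hd ?r = x" using k hd_rotate_conv_nth[OF ne0, of k] by simp
  then have "?r = x # tl ?r" using ne by (metis list.collapse)
  moreover have "distinct ?r" "set ?r = set xs" "cedges ?r = cedges xs" "length ?r = length xs"
    using assms by (auto simp: cedges_rotate)
  ultimately show ?thesis by metis
qed

lemma path_nth_inj:
  assumes "distinct ps" "0 < i" "i < length ps" "0 < j" "j < length ps"
    "{ps!(i-1), ps!i} = {ps!(j-1), ps!j}"
  shows "i = j"
proof (rule ccontr)
  assume ij: "i \<noteq> j"
  have e1: "ps!i \<noteq> ps!j" using assms ij by (simp add: nth_eq_iff_index_eq)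
  then have "ps!i = ps!(j-1)" "ps!(i-1) = ps!j" using assms(6) by (auto simp: doubleton_eq_iff)
  then have "i = j - 1" "i - 1 = j" using assms by (auto simp: nth_eq_iff_index_eq)
  then show False using assms by simp
qed

lemma hd_last_notin_pedges:
  assumes "distinct ps" "length ps \<ge> 3"
  shows "{hd ps, last ps} \<notin> pedges ps"
proof
  assume "{hd ps, last ps} \<in> pedges ps"
  then obtain i where i: "{hd ps, last ps} = {ps!i, ps!Suc i}" "Suc i < length ps"
    by (auto simp: pedges_nth)
  have ne: "ps \<noteq> []" using assms by auto
  have "hd ps = ps!0" "last ps = ps!(length ps - 1)" using ne by (auto simp: hd_conv_nth last_conv_nth)
  then have "{ps!0, ps!(length ps - 1)} = {ps!i, ps!Suc i}" using i by simp
  then consider "ps!0 = ps!i" "ps!(length ps - 1) = ps!Suc i" | "ps!0 = ps!Suc i" "ps!(length ps - 1) = ps!i"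
    by (auto simp: doubleton_eq_iff)
  then show False
  proof cases
    case 1
    have "0 = i" using 1(1) nth_eq_iff_index_eq[OF assms(1), of 0 i] i(2) ne by simp
    moreover have "length ps - 1 = Suc i"
      using 1(2) nth_eq_iff_index_eq[OF assms(1), of "length ps - 1" "Suc i"] i(2) ne by simp
    ultimately show False using assms(2) by simp
  next
    case 2
    have "0 = Suc i" using 2(1) nth_eq_iff_index_eq[OF assms(1), of 0 "Suc i"] i(2) ne by simp
    then show False by simp
  qed
qed

lemma path_extract:
  assumes "distinct xs" "length xs \<ge> 3" "{x,z} \<in> cedges xs" "x \<noteq> z"
  shows "\<exists>ps. distinct ps \<and> set ps = set xs \<and> hd ps = x \<and> last ps = z \<and> length ps = length xs
              \<and> pedges ps \<subseteq> cedges xs"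
proof -
  have "x \<in> set xs" using cedges_subset[OF assms(3)] by auto
  then obtain zs where zs: "distinct (x # zs)" "set (x # zs) = set xs" "cedges (x # zs) = cedges xs"
    "length (x # zs) = length xs"
    using rotate_to[OF assms(1)] by blast
  have zne: "zs \<noteq> []" using zs(4) assms(2) by auto
  have ce: "cedges (x # zs) = insert {last zs, x} (insert {x, hd zs} (pedges zs))"
    using zne by (simp add: cedges_def pedges_Cons)
  have "{x,z} \<notin> pedges zs" using pedges_subset zs(1) by fastforce
  then have "{x,z} = {last zs, x} \<or> {x,z} = {x, hd zs}" using ce assms(3) zs(3) by auto
  then have "z = last zs \<or> z = hd zs" using assms(4) by (auto simp: doubleton_eq_iff)
  then show ?thesis
  proof
    assume "z = last zs"
    then show ?thesis using zs zne ce by (intro exI[of _ "x # zs"]) (auto simp: pedges_Cons)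
  next
    assume z: "z = hd zs"
    have "pedges (x # rev zs) = insert {x, last zs} (pedges zs)"
      using zne by (simp add: pedges_Cons pedges_rev hd_rev)
    then show ?thesis using zs zne ce z
      by (intro exI[of _ "x # rev zs"]) (auto simp: last_rev insert_commute)
  qed
qed

lemma rot_cycle:
  assumes "distinct ps" "0 < i" "i < length ps"
  shows "cedges (take i ps @ rev (drop i ps)) =
           pedges (take i ps) \<union> pedges (drop i ps) \<union> {{ps!(i-1), last ps}, {ps!i, hd ps}}"
    and "pedges ps = pedges (take i ps) \<union> pedges (drop i ps) \<union> {{ps!(i-1), ps!i}}"
    and "distinct (take i ps @ rev (drop i ps))"
    and "set (take i ps @ rev (drop i ps)) = set ps"
proof -
  have t: "take i ps \<noteq> []" and d: "drop i ps \<noteq> []" using assms by auto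
  have lt: "last (take i ps) = ps!(i-1)" using assms t by (subst last_conv_nth) auto
  have hdd: "hd (drop i ps) = ps!i" using assms by (simp add: hd_drop_conv_nth)
  have ld: "last (drop i ps) = last ps" using assms by simp
  have ht: "hd (take i ps) = hd ps" using assms by simp
  show "cedges (take i ps @ rev (drop i ps)) =
           pedges (take i ps) \<union> pedges (drop i ps) \<union> {{ps!(i-1), last ps}, {ps!i, hd ps}}"
    using t d lt hdd ld ht
    by (auto simp: cedges_def pedges_append pedges_rev hd_rev last_rev)
  have "pedges ps = pedges (take i ps @ drop i ps)" by simp
  then show "pedges ps = pedges (take i ps) \<union> pedges (drop i ps) \<union> {{ps!(i-1), ps!i}}"
    using t d lt hdd by (simp only: pedges_append) auto
  show "distinct (take i ps @ rev (drop i ps))" using assms(1)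
    by (metis append_take_drop_id distinct_append distinct_rev set_rev)
  show "set (take i ps @ rev (drop i ps)) = set ps"
    by (metis append_take_drop_id set_append set_rev)
qed

definition rotI :: "'a set set \<Rightarrow> 'a list \<Rightarrow> nat set" where
  "rotI F0 ps = {i\<in>{1..<length ps}. {hd ps, ps!i} \<in> F0 \<and> {last ps, ps!(i-1)} \<in> F0}"

lemma rot_count:
  assumes "distinct ps" "length ps \<ge> 2" "\<forall>u. {u} \<notin> F0"
  shows "deg (set ps) F0 (hd ps) + deg (set ps) F0 (last ps) \<le> card (rotI F0 ps) + (length ps - 1)"
proof -
  let ?n = "length ps"
  define S1 where "S1 = {i\<in>{1..<?n}. {hd ps, ps!i} \<in> F0}"
  define S2 where "S2 = {i\<in>{1..<?n}. {last ps, ps!(i-1)} \<in> F0}"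
  have ne: "ps \<noteq> []" using assms by auto
  have h0: "hd ps = ps!0" using ne by (simp add: hd_conv_nth)
  have l0: "last ps = ps!(?n - 1)" using ne by (simp add: last_conv_nth)
  have im1: "{w\<in>set ps. {hd ps, w} \<in> F0} = (\<lambda>i. ps!i) ` S1"
  proof
    show "{w\<in>set ps. {hd ps, w} \<in> F0} \<subseteq> (\<lambda>i. ps!i) ` S1"
    proof
      fix w assume w: "w \<in> {w\<in>set ps. {hd ps, w} \<in> F0}"
      then obtain j where j: "j < ?n" "ps!j = w" by (auto simp: in_set_conv_nth)
      have "j \<noteq> 0"
      proof
        assume "j = 0" then have "{ps!0} \<in> F0" using w j h0 by auto
        then show False using assms(3) by blast
      qed
      then show "w \<in> (\<lambda>i. ps!i) ` S1" using j w unfolding S1_def by force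
    qed
  qed (auto simp: S1_def)
  have im2: "{w\<in>set ps. {last ps, w} \<in> F0} = (\<lambda>i. ps!(i-1)) ` S2"
  proof
    show "{w\<in>set ps. {last ps, w} \<in> F0} \<subseteq> (\<lambda>i. ps!(i-1)) ` S2"
    proof
      fix w assume w: "w \<in> {w\<in>set ps. {last ps, w} \<in> F0}"
      then obtain j where j: "j < ?n" "ps!j = w" by (auto simp: in_set_conv_nth)
      have "j \<noteq> ?n - 1"
      proof
        assume "j = ?n - 1" then have "{ps!j} \<in> F0" using w j l0 by auto
        then show False using assms(3) by blast
      qed
      then have "Suc j \<in> S2" using j w unfolding S2_def by auto
      then show "w \<in> (\<lambda>i. ps!(i-1)) ` S2" using j by force
    qed
  qed (auto simp: S2_def)
  have inj1: "inj_on (\<lambda>i. ps!i) S1"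
    using assms(1) by (auto simp: S1_def inj_on_def nth_eq_iff_index_eq)
  have inj2: "inj_on (\<lambda>i. ps!(i-1)) S2"
    using assms(1) by (auto simp: S2_def inj_on_def nth_eq_iff_index_eq)
  have c1: "deg (set ps) F0 (hd ps) = card S1" unfolding deg_def im1 using card_image[OF inj1] .
  have c2: "deg (set ps) F0 (last ps) = card S2" unfolding deg_def im2 using card_image[OF inj2] .
  have fin: "finite S1" "finite S2" by (auto simp: S1_def S2_def)
  have "card S1 + card S2 = card (S1 \<union> S2) + card (S1 \<inter> S2)"
    using card_Un_Int[OF fin] .
  moreover have "card (S1 \<union> S2) \<le> ?n - 1"
  proof -
    have "S1 \<union> S2 \<subseteq> {1..<?n}" by (auto simp: S1_def S2_def)
    then show ?thesis by (metis card_atLeastLessThan card_mono finite_atLeastLessThan)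
  qed
  moreover have "S1 \<inter> S2 = rotI F0 ps" by (auto simp: S1_def S2_def rotI_def)
  ultimately show ?thesis using c1 c2 by simp
qed

lemma rot_apply:
  assumes "distinct ps" "set ps = V" "pedges ps \<subseteq> F" "F0 \<subseteq> F" "i \<in> rotI F0 ps"
  shows "hc V F (take i ps @ rev (drop i ps))"
    and "pedges ps \<subseteq> insert {ps!(i-1), ps!i} (cedges (take i ps @ rev (drop i ps)))"
proof -
  have i: "0 < i" "i < length ps" and e: "{hd ps, ps!i} \<in> F0" "{last ps, ps!(i-1)} \<in> F0"
    using assms(5) by (auto simp: rotI_def)
  have p1: "pedges (take i ps) \<subseteq> F" "pedges (drop i ps) \<subseteq> F"
    using rot_cycle(2)[OF assms(1) i] assms(3) by auto
  show "hc V F (take i ps @ rev (drop i ps))"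
    unfolding hc_def using rot_cycle[OF assms(1) i] p1 e assms(2,4)
    by (auto simp: insert_commute)
  show "pedges ps \<subseteq> insert {ps!(i-1), ps!i} (cedges (take i ps @ rev (drop i ps)))"
    using rot_cycle[OF assms(1) i] by auto
qed



definition allpairs :: "'a set \<Rightarrow> 'a set set" where
  "allpairs V = {{u,w} | u w. u \<in> V \<and> w \<in> V \<and> u \<noteq> w}"

lemma finite_allpairs: "finite V \<Longrightarrow> finite (allpairs V)"
proof -
  assume "finite V"
  moreover have "allpairs V \<subseteq> Pow V" by (auto simp: allpairs_def)
  ultimately show ?thesis by (meson finite_Pow_iff finite_subset)
qed

lemma deg_mono: "finite V \<Longrightarrow> F \<subseteq> F' \<Longrightarrow> deg V F u \<le> deg V F' u"
  unfolding deg_def by (rule card_mono) auto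

lemma rot_exists:
  assumes "distinct ps" "set ps = V" "length ps \<ge> 3" "pedges ps \<subseteq> F" "F0 \<subseteq> F" "\<forall>u. {u} \<notin> F0"
    "length ps \<le> deg V F0 (hd ps) + deg V F0 (last ps)"
  shows "\<exists>ys. hc V F ys"
proof -
  have "length ps \<le> card (rotI F0 ps) + (length ps - 1)"
    using rot_count[OF assms(1) _ assms(6)] assms(2,3,7) by fastforce
  then have "card (rotI F0 ps) \<noteq> 0" using assms(3) by linarith
  then have "rotI F0 ps \<noteq> {}" by auto
  then obtain i where "i \<in> rotI F0 ps" by blast
  then show ?thesis using rot_apply(1)[OF assms(1,2,4,5)] by blast
qed

lemma ore_aux:
  assumes "finite V" "card V \<ge> 3" "card (allpairs V - F) = m" "\<forall>u. {u} \<notin> F"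
    "\<forall>u\<in>V. \<forall>w\<in>V. u \<noteq> w \<longrightarrow> {u,w} \<notin> F \<longrightarrow> card V \<le> deg V F u + deg V F w"
  shows "\<exists>xs. hc V F xs"
  using assms(3,4,5)
proof (induction m arbitrary: F rule: less_induct)
  case (less m)
  show ?case
  proof (cases "allpairs V \<subseteq> F")
    case True
    obtain xs where xs: "distinct xs" "set xs = V" using finite_distinct_list[OF assms(1)] by blast
    have len: "length xs \<ge> 3" using xs assms(2) distinct_card by metis
    have "cedges xs \<subseteq> allpairs V"
    proof
      fix e assume "e \<in> cedges xs"
      then obtain a b where "a \<noteq> b" "a \<in> set xs" "b \<in> set xs" "e = {a,b}"
        using cedges_elem[OF xs(1) _] len by fastforce
      then show "e \<in> allpairs V" using xs by (auto simp: allpairs_def)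
    qed
    then show ?thesis using True xs unfolding hc_def by blast
  next
    case False
    then obtain x z where xz: "x \<in> V" "z \<in> V" "x \<noteq> z" "{x,z} \<notin> F"
      by (auto simp: allpairs_def)
    define F' where "F' = insert {x,z} F"
    have "allpairs V - F' \<subset> allpairs V - F"
      using xz by (auto simp: F'_def allpairs_def)
    then have lt: "card (allpairs V - F') < m"
      using less.prems(1) finite_allpairs[OF assms(1)] by (metis finite_Diff psubset_card_mono)
    have s': "\<forall>u. {u} \<notin> F'" using less.prems(2) xz(3) by (auto simp: F'_def doubleton_eq_iff)
    have d': "\<forall>u\<in>V. \<forall>w\<in>V. u \<noteq> w \<longrightarrow> {u,w} \<notin> F' \<longrightarrow> card V \<le> deg V F' u + deg V F' w"
    proof (intro ballI impI)
      fix u w assume "u \<in> V" "w \<in> V" "u \<noteq> w" "{u,w} \<notin> F'"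
      then have "card V \<le> deg V F u + deg V F w" using less.prems(3) by (auto simp: F'_def)
      moreover have "deg V F u \<le> deg V F' u" "deg V F w \<le> deg V F' w"
        using deg_mono[OF assms(1), of F F'] by (auto simp: F'_def)
      ultimately show "card V \<le> deg V F' u + deg V F' w" by linarith
    qed
    obtain xs where xs: "hc V F' xs" using less.IH[OF lt refl s' d'] by blast
    have len: "length xs \<ge> 3" using xs assms(2) distinct_card unfolding hc_def by metis
    show ?thesis
    proof (cases "{x,z} \<in> cedges xs")
      case False
      then have "hc V F xs" using xs by (auto simp: hc_def F'_def)
      then show ?thesis by blast
    next
      case True
      obtain ps where ps: "distinct ps" "set ps = set xs" "hd ps = x" "last ps = z"
        "length ps = length xs" "pedges ps \<subseteq> cedges xs"
        using path_extract[OF _ len True xz(3)] xs unfolding hc_def by blast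
      have "{x,z} \<notin> pedges ps" using hd_last_notin_pedges[of ps] ps len by simp
      then have pF: "pedges ps \<subseteq> F" using ps(6) xs by (auto simp: hc_def F'_def)
      have "length ps \<le> deg V F (hd ps) + deg V F (last ps)"
        using less.prems(3) xz ps xs distinct_card unfolding hc_def by metis
      then show ?thesis
        using rot_exists[OF ps(1) _ _ pF order_refl less.prems(2)] ps xs len unfolding hc_def by auto
    qed
  qed
qed

lemma ore:
  assumes "finite V" "card V \<ge> 3" "\<forall>u. {u} \<notin> F"
    "\<forall>u\<in>V. \<forall>w\<in>V. u \<noteq> w \<longrightarrow> {u,w} \<notin> F \<longrightarrow> card V \<le> deg V F u + deg V F w"
  shows "\<exists>xs. hc V F xs"
  using ore_aux[OF assms(1,2) refl assms(3,4)] .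



lemma two_elems:
  assumes "2 \<le> card I"
  shows "\<exists>i1 i2. i1 \<in> I \<and> i2 \<in> I \<and> i1 \<noteq> i2"
proof -
  have "finite I" "I \<noteq> {}" using assms by (auto intro: card_ge_0_finite)
  then obtain i1 where i1: "i1 \<in> I" by blast
  have "card (I - {i1}) \<ge> 1" using assms i1 \<open>finite I\<close> by simp
  then have "I - {i1} \<noteq> {}" by (metis card.empty not_one_le_zero)
  then obtain i2 where "i2 \<in> I - {i1}" by blast
  then show ?thesis using i1 by blast
qed

lemma chord:
  assumes "finite V" "hc V F0 xs" "F0 \<subseteq> F" "\<forall>u. {u} \<notin> F0" "x \<in> V" "y \<in> V" "x \<noteq> y"
    "{x,y} \<notin> cedges xs" "{x,y} \<in> F"
    "\<forall>u\<in>V. \<forall>w\<in>V. u \<noteq> w \<longrightarrow> card V + 1 \<le> deg V F0 u + deg V F0 w"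
  shows "\<exists>ys. hc V F ys \<and> {x,y} \<in> cedges ys \<and> (\<exists>e\<in>cedges xs. e \<in> cedges ys)"
proof -
  have xs: "distinct xs" "set xs = V" "cedges xs \<subseteq> F0" using assms(2) by (auto simp: hc_def)
  obtain zs where zs: "distinct (x # zs)" "set (x # zs) = set xs" "cedges (x # zs) = cedges xs"
    "length (x # zs) = length xs"
    using rotate_to[OF xs(1)] assms(5) xs(2) by blast
  have yz: "y \<in> set zs" using zs(2) xs(2) assms(6,7) by auto
  then have zne: "zs \<noteq> []" by auto
  obtain m where m: "m < length zs" "zs ! m = y" using yz by (meson in_set_conv_nth)
  have ce: "cedges (x # zs) = insert {last zs, x} (insert {x, hd zs} (pedges zs))"
    using zne by (simp add: cedges_def pedges_Cons)
  have m0: "m \<noteq> 0"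
  proof
    assume "m = 0" then have "y = hd zs" using m zne by (simp add: hd_conv_nth)
    then show False using assms(8) ce zs(3) by auto
  qed
  have m1: "m \<noteq> length zs - 1"
  proof
    assume "m = length zs - 1" then have "y = last zs" using m zne by (simp add: last_conv_nth)
    then show False using assms(8) ce zs(3) by (auto simp: insert_commute)
  qed
  define a where "a = take (Suc m) zs"
  define b where "b = drop (Suc m) zs"
  define S where "S = a @ x # rev b"
  have ane: "a \<noteq> []" and bne: "b \<noteq> []" using m m1 by (auto simp: a_def b_def)
  have la: "length a = Suc m" using m by (simp add: a_def)
  have lasta: "last a = y" using m la ane unfolding a_def by (subst last_conv_nth) auto
  have zab: "zs = a @ b" by (simp add: a_def b_def)
  have pzs: "pedges zs = pedges a \<union> pedges b \<union> {{last a, hd b}}"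
    using ane bne unfolding zab by (simp only: pedges_append) simp
  have pS: "pedges S = pedges a \<union> insert {x, last zs} (pedges b) \<union> {{y, x}}"
  proof -
    have "last zs = last b" using zab bne by simp
    then show ?thesis using ane bne lasta unfolding S_def
      by (simp add: pedges_append pedges_Cons pedges_rev hd_rev)
  qed
  have pzc: "pedges zs \<subseteq> cedges xs" using ce zs(3) by auto
  have xl: "{x, last zs} \<in> cedges xs" using ce zs(3) by (auto simp: insert_commute)
  have pSsub: "pedges S \<subseteq> insert {x,y} (cedges xs)"
    using pS pzs pzc xl by (auto simp: insert_commute)
  then have pSF: "pedges S \<subseteq> F" using xs(3) assms(3,9) by auto
  have dS: "distinct S" using zs(1) zab unfolding S_def by auto
  have sS: "set S = V" using zs(2) xs(2) zab unfolding S_def by auto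
  have lS: "length S = card V" using dS sS distinct_card by metis
  have "hd S = hd a" using ane by (simp add: S_def)
  also have "hd a = hd zs" using zne by (cases zs) (auto simp: a_def)
  finally have hS: "hd S = zs!0" using zne by (simp add: hd_conv_nth)
  have lastS: "last S = zs!(Suc m)" using bne m m1 unfolding S_def b_def
    by (simp add: last_rev hd_drop_conv_nth)
  have sm: "Suc m < length zs" using m m1 by simp
  have "zs!0 \<noteq> zs!(Suc m)" using zs(1) sm zne nth_eq_iff_index_eq[of zs 0 "Suc m"] by auto
  then have hl: "hd S \<noteq> last S" using hS lastS by simp
  have "zs!0 \<in> set zs" "zs!(Suc m) \<in> set zs" using sm by (auto intro: nth_mem)
  then have hV: "hd S \<in> V" "last S \<in> V" using hS lastS zs(2) xs(2) by auto
  have "card V + 1 \<le> deg V F0 (hd S) + deg V F0 (last S)" using assms(10) hl hV by blast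
  moreover have lS2: "2 \<le> length S" unfolding S_def using la bne by simp
  moreover have "deg V F0 (hd S) + deg V F0 (last S) \<le> card (rotI F0 S) + (length S - 1)"
    using rot_count[OF dS lS2 assms(4)] sS by simp
  ultimately have "2 \<le> card (rotI F0 S)" using lS by linarith
  then obtain i1 i2 where i12: "i1 \<in> rotI F0 S" "i2 \<in> rotI F0 S" "i1 \<noteq> i2"
    using two_elems by blast
  have ri: "{S!(i1-1), S!i1} \<noteq> {S!(i2-1), S!i2}"
    using path_nth_inj[OF dS] i12 by (auto simp: rotI_def)
  obtain i where i: "i \<in> rotI F0 S" "{S!(i-1), S!i} \<noteq> {x,y}"
  proof (cases "{S!(i1-1), S!i1} = {x,y}")
    case True then show ?thesis using that[of i2] i12 ri by simp
  next
    case False then show ?thesis using that[of i1] i12 by simp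
  qed
  define ys where "ys = take i S @ rev (drop i S)"
  have hys: "hc V F ys" and pys: "pedges S \<subseteq> insert {S!(i-1), S!i} (cedges ys)"
    using rot_apply[OF dS sS pSF assms(3) i(1)] by (auto simp: ys_def)
  have "{x,y} \<in> cedges ys" using pys pS i(2) by (auto simp: insert_commute)
  moreover have "\<exists>e\<in>cedges xs. e \<in> cedges ys"
  proof -
    have e1a: "{zs!0, zs!1} \<in> pedges a"
      using la m0 unfolding pedges_nth by (auto simp: a_def intro!: exI[of _ 0])
    have e1c: "{zs!0, zs!1} \<in> cedges xs" using e1a pzs pzc by auto
    have "zs!0 \<in> set zs" "zs!1 \<in> set zs" using sm m0 by (auto intro!: nth_mem)
    then have "x \<notin> {zs!0, zs!1}" using zs(1) by auto
    then have ne: "{zs!0, zs!1} \<noteq> {x, last zs}" by auto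
    show ?thesis
    proof (cases "{S!(i-1), S!i} = {zs!0, zs!1}")
      case True
      then have "{x, last zs} \<in> cedges ys" using pys pS ne by auto
      then show ?thesis using xl by blast
    next
      case False
      then have "{zs!0, zs!1} \<in> cedges ys" using pys pS e1a by auto
      then show ?thesis using e1c by blast
    qed
  qed
  ultimately show ?thesis using hys by blast
qed



fun gcol :: "(nat \<Rightarrow> 'c set) \<Rightarrow> nat \<Rightarrow> 'c \<Rightarrow> nat \<Rightarrow> 'c" where
  "gcol L n a 0 = a"
| "gcol L n a (Suc j) = (if Suc j = n - 1 then (SOME x. x \<in> L (Suc j) - {gcol L n a j, a})
                         else (SOME x. x \<in> L (Suc j) - {gcol L n a j}))"

declare gcol.simps[simp del]

lemma minus_one_ne:
  assumes "2 \<le> card A" shows "A - {c} \<noteq> {}"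
proof -
  have "finite A" using assms by (auto intro: card_ge_0_finite)
  then have "card A - 1 \<le> card (A - {c})" by (simp add: card_Diff_singleton_if)
  show ?thesis
  proof
    assume "A - {c} = {}"
    then have "card (A - {c}) = 0" by (metis card.empty)
    with \<open>card A - 1 \<le> card (A - {c})\<close> assms show False by simp
  qed
qed

lemma greedy:
  assumes "2 \<le> n" "a \<in> L 0" "\<forall>j. 1 \<le> j \<and> j < n \<longrightarrow> 2 \<le> card (L j)"
    "2 \<le> card (L (n-1) - {a})"
  shows "\<exists>col. \<forall>i<n. col i \<in> L i \<and> col i \<noteq> col (Suc i mod n)"
proof -
  let ?g = "gcol L n a"
  have P: "?g (Suc j) \<in> L (Suc j) \<and> ?g (Suc j) \<noteq> ?g j \<and> (Suc j = n - 1 \<longrightarrow> ?g (Suc j) \<noteq> a)"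
    if "Suc j < n" for j
  proof (cases "Suc j = n - 1")
    case True
    have "(L (n-1) - {a}) - {?g j} \<noteq> {}" using minus_one_ne[OF assms(4)] .
    then have "\<exists>x. x \<in> L (Suc j) - {?g j, a}" using True by auto
    moreover have "?g (Suc j) = (SOME x. x \<in> L (Suc j) - {?g j, a})"
      by (simp only: gcol.simps if_P[OF True])
    ultimately have "?g (Suc j) \<in> L (Suc j) - {?g j, a}" by (metis (mono_tags, lifting) someI_ex)
    then show ?thesis by blast
  next
    case False
    have "2 \<le> card (L (Suc j))" using assms(3) that by simp
    then have "L (Suc j) - {?g j} \<noteq> {}" by (rule minus_one_ne)
    then have "\<exists>x. x \<in> L (Suc j) - {?g j}" by auto
    moreover have "?g (Suc j) = (SOME x. x \<in> L (Suc j) - {?g j})"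
      by (simp only: gcol.simps if_not_P[OF False])
    ultimately have "?g (Suc j) \<in> L (Suc j) - {?g j}" by (metis (mono_tags, lifting) someI_ex)
    then show ?thesis using False by auto
  qed
  have "\<forall>i<n. ?g i \<in> L i \<and> ?g i \<noteq> ?g (Suc i mod n)"
  proof (intro allI impI conjI)
    fix i assume i: "i < n"
    show "?g i \<in> L i"
    proof (cases i)
      case 0 then show ?thesis using assms(2) by (simp add: gcol.simps(1))
    next
      case (Suc j) then show ?thesis using P[of j] i by simp
    qed
    show "?g i \<noteq> ?g (Suc i mod n)"
    proof (cases "Suc i < n")
      case True then show ?thesis using P[of i] mod_less[OF True] by metis
    next
      case False
      then have si: "Suc i = n" using i by simp
      then obtain j where j: "i = Suc j" using assms(1) by (cases i) auto
      have h: "Suc j < n" using si j by simp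
      have h2: "Suc j = n - 1" using si j by simp
      have "?g (Suc j) \<noteq> a" using P[OF h] h2 by blast
      then have "?g i \<noteq> a" using j by simp
      then show ?thesis using si by (simp add: gcol.simps(1))
    qed
  qed
  then show ?thesis by blast
qed

lemma greedy_rot:
  assumes "2 \<le> n" "i0 < n" "a \<in> L i0" "\<forall>j<n. j \<noteq> i0 \<longrightarrow> 2 \<le> card (L j)"
    "2 \<le> card (L ((i0 + n - 1) mod n) - {a})"
  shows "\<exists>col. \<forall>i<n. col i \<in> L i \<and> col i \<noteq> col (Suc i mod n)"
proof -
  define L' where "L' j = L ((j + i0) mod n)" for j
  have a0: "a \<in> L' 0" using assms(2,3) by (simp add: L'_def)
  have c: "\<forall>j. 1 \<le> j \<and> j < n \<longrightarrow> 2 \<le> card (L' j)"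
  proof (intro allI impI)
    fix j assume j: "1 \<le> j \<and> j < n"
    have ne: "(j + i0) mod n \<noteq> i0"
    proof
      assume "(j + i0) mod n = i0"
      show False
      proof (cases "j + i0 < n")
        case True then show False using \<open>(j + i0) mod n = i0\<close> j by simp
      next
        case False
        then have "(j + i0) mod n = j + i0 - n" using j assms(2) by (simp add: mod_if)
        then show False using \<open>(j + i0) mod n = i0\<close> j False by linarith
      qed
    qed
    then show "2 \<le> card (L' j)" using assms(1,4) unfolding L'_def by simp
  qed
  have e: "L' (n - 1) = L ((i0 + n - 1) mod n)" unfolding L'_def using assms(1)
    by (simp add: add.commute)
  obtain col' where col': "\<forall>i<n. col' i \<in> L' i \<and> col' i \<noteq> col' (Suc i mod n)"
    using greedy[OF assms(1) a0 c] assms(5) e by auto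
  define col where "col i = col' ((i + (n - i0)) mod n)" for i
  have "\<forall>i<n. col i \<in> L i \<and> col i \<noteq> col (Suc i mod n)"
  proof (intro allI impI)
    fix i assume i: "i < n"
    let ?k = "(i + (n - i0)) mod n"
    have k: "?k < n" using assms(1) by simp
    have "(?k + i0) mod n = (i + (n - i0) + i0) mod n" by (simp add: mod_add_left_eq)
    also have "\<dots> = (i + n) mod n" using assms(2) by simp
    also have "\<dots> = i" using i by simp
    finally have k1: "L' ?k = L i" by (simp add: L'_def)
    have "(Suc i mod n + (n - i0)) mod n = (Suc i + (n - i0)) mod n" by (simp add: mod_add_left_eq)
    also have "\<dots> = Suc (i + (n - i0)) mod n" by simp
    also have "\<dots> = Suc ?k mod n" by (simp add: mod_Suc_eq)
    finally have k2: "col (Suc i mod n) = col' (Suc ?k mod n)" by (simp add: col_def)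
    have "col' ?k \<in> L' ?k" "col' ?k \<noteq> col' (Suc ?k mod n)" using col' k by auto
    then show "col i \<in> L i \<and> col i \<noteq> col (Suc i mod n)"
      using k1 k2 unfolding col_def by simp
  qed
  then show ?thesis by blast
qed

lemma alternate:
  assumes "even n" "\<forall>i<n. a \<in> L i \<and> b \<in> L i" "a \<noteq> b"
  shows "\<exists>col. \<forall>i<n. col i \<in> L i \<and> col i \<noteq> col (Suc i mod n)"
proof -
  define col where "col i = (if even i then a else b)" for i :: nat
  have "\<forall>i<n. col i \<in> L i \<and> col i \<noteq> col (Suc i mod n)"
  proof (intro allI impI conjI)
    fix i assume i: "i < n"
    show "col i \<in> L i" using assms(2) i by (simp add: col_def)
    show "col i \<noteq> col (Suc i mod n)"
    proof (cases "Suc i < n")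
      case True then show ?thesis using assms(3) by (simp add: col_def)
    next
      case False then have "Suc i = n" using i by simp
      then show ?thesis using assms(1,3) by (auto simp: col_def)
    qed
  qed
  then show ?thesis by blast
qed

lemma uniform:
  fixes n :: nat
  assumes "0 < n" "\<forall>i<n. 2 \<le> card (L i)"
    "\<not>(\<exists>i<n. \<exists>a\<in>L i. 2 \<le> card (L ((i + n - 1) mod n) - {a}))"
  shows "\<forall>i<n. L i = L 0 \<and> card (L i) = 2"
proof -
  have step: "L i = L ((i + n - 1) mod n) \<and> card (L i) = 2" if i: "i < n" for i
  proof -
    let ?p = "(i + n - 1) mod n"
    have p: "?p < n" using assms(1) by simp
    have fp2: "2 \<le> card (L ?p)" using assms(2) p by blast
    then have fp: "finite (L ?p)" "2 \<le> card (L ?p)" by (auto intro: ccontr)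
    have fi2: "2 \<le> card (L i)" using assms(2) i by blast
    then have fi: "finite (L i)" "2 \<le> card (L i)" by (auto intro: ccontr)
    then obtain a where a: "a \<in> L i" by fastforce
    have "\<not> 2 \<le> card (L ?p - {a})" using assms(3) i a by blast
    then have lt: "card (L ?p - {a}) < 2" by simp
    have sub: "L i \<subseteq> L ?p"
    proof
      fix b assume b: "b \<in> L i"
      have "\<not> 2 \<le> card (L ?p - {b})" using assms(3) i b by blast
      then have "card (L ?p - {b}) < 2" by simp
      then show "b \<in> L ?p" using fp by (metis Diff_empty Diff_insert0 not_le)
    qed
    have "a \<in> L ?p" using sub a by blast
    then have "card (L ?p - {a}) = card (L ?p) - 1" using fp by (simp add: card_Diff_singleton)
    then have "card (L ?p) \<le> 2" using lt by simp
    then have "card (L i) \<le> card (L ?p)" "card (L ?p) \<le> 2" using card_mono[OF fp(1) sub] by auto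
    then have "card (L i) = card (L ?p)" using fi by simp
    then have "L i = L ?p" using card_subset_eq[OF fp(1) sub] by simp
    then show ?thesis using fi \<open>card (L ?p) \<le> 2\<close> by simp
  qed
  have "L i = L 0" if "i < n" for i
    using that
  proof (induction i)
    case 0 then show ?case by simp
  next
    case (Suc i)
    have "(Suc i + n - 1) mod n = i" using Suc.prems by simp
    then show ?case using step[OF Suc.prems] Suc by simp
  qed
  then show ?thesis using step by blast
qed



lemma cedge_idx_inj:
  assumes "distinct xs" "3 \<le> length xs" "i < length xs" "j < length xs"
    "{xs!i, xs!(Suc i mod length xs)} = {xs!j, xs!(Suc j mod length xs)}"
  shows "i = j"
proof (rule ccontr)
  assume ij: "i \<noteq> j"
  let ?n = "length xs"
  have n0: "0 < ?n" using assms(3) by linarith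
  then have si: "Suc i mod ?n < ?n" "Suc j mod ?n < ?n" by simp_all
  have "xs!i \<noteq> xs!j" using ij assms by (simp add: nth_eq_iff_index_eq)
  then have "xs!i = xs!(Suc j mod ?n)" "xs!(Suc i mod ?n) = xs!j" using assms(5) by (auto simp: doubleton_eq_iff)
  then have e: "i = Suc j mod ?n" "Suc i mod ?n = j" using assms si by (auto simp: nth_eq_iff_index_eq)
  show False
  proof (cases "Suc j < ?n")
    case True
    then have ij: "i = Suc j" using e by simp
    then have ss: "Suc (Suc j) mod ?n = j" using e(2) by simp
    show False
    proof (cases "Suc (Suc j) < ?n")
      case True then show False using ss by simp
    next
      case False
      then have "Suc (Suc j) = ?n" using \<open>Suc j < ?n\<close> by simp
      then have "j = 0" using ss by simp
      then show False using assms(2) \<open>Suc (Suc j) = ?n\<close> by simp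
    qed
  next
    case False
    then have "Suc j = ?n" using assms by simp
    then have "i = 0" using e by simp
    then show False using e(2) assms(2) \<open>Suc j = ?n\<close> by (simp add: mod_if)
  qed
qed

locale pcs =
  fixes V :: "'v set" and E :: "'e set" and ends :: "'e \<Rightarrow> 'v set" and c :: nat and phi :: "'e \<Rightarrow> nat"
  assumes G: "colored_multigraph V E ends c phi"
    and degree: "\<forall>x\<in>V. \<forall>y\<in>V. x \<noteq> y \<longrightarrow>
                   delta_dym V E ends phi x + delta_dym V E ends phi y \<ge> card V + 1"
    and twoV: "\<exists>x\<in>V. \<exists>y\<in>V. x \<noteq> y"
begin

definition lst :: "'v set \<Rightarrow> nat set" where "lst p = phi ` {e\<in>E. ends e = p}"
definition Fd :: "'v set set" where "Fd = {p. \<exists>u\<in>V. \<exists>w\<in>V. u \<noteq> w \<and> p = {u,w} \<and> 2 \<le> card (lst p)}"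

lemma finV: "finite V" and finE: "finite E" using G by (auto simp: colored_multigraph_def)

lemma fin_lst: "finite (lst p)" using finE by (simp add: lst_def)

lemma ends2: "e \<in> E \<Longrightarrow> \<exists>u w. u \<noteq> w \<and> u \<in> V \<and> w \<in> V \<and> ends e = {u,w}"
  using G by (auto simp: colored_multigraph_def)

lemma Fd_nosing: "\<forall>u. {u} \<notin> Fd"
  by (auto simp: Fd_def doubleton_eq_iff)

lemma Fd_card: "p \<in> Fd \<Longrightarrow> 2 \<le> card (lst p)" by (auto simp: Fd_def)

lemma lst_eb: "lst {x,y} = phi ` edges_between E ends x y"
  by (simp add: lst_def edges_between_def)

lemma deg_eq: "deg V Fd x = delta_dym V E ends phi x"
proof -
  have "{w\<in>V. {x,w} \<in> Fd} = {y \<in> V. \<exists>e\<in>edges_between E ends x y. \<exists>f\<in>edges_between E ends x y. phi e \<noteq> phi f}"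
  proof (intro Collect_cong conj_cong refl iffI)
    fix y assume y: "y \<in> V" "{x,y} \<in> Fd"
    then have "2 \<le> card (lst {x,y})" using Fd_card by blast
    then obtain a b where ab: "a \<in> lst {x,y}" "b \<in> lst {x,y}" "a \<noteq> b" using two_elems by blast
    then show "\<exists>e\<in>edges_between E ends x y. \<exists>f\<in>edges_between E ends x y. phi e \<noteq> phi f"
      unfolding lst_eb by blast
  next
    fix y assume y: "y \<in> V" and "\<exists>e\<in>edges_between E ends x y. \<exists>f\<in>edges_between E ends x y. phi e \<noteq> phi f"
    then obtain e f where ef: "e \<in> edges_between E ends x y" "f \<in> edges_between E ends x y" "phi e \<noteq> phi f"
      by blast
    have eE: "e \<in> E" "ends e = {x,y}" using ef by (auto simp: edges_between_def)
    obtain u w where uw: "u \<noteq> w" "u \<in> V" "w \<in> V" "ends e = {u,w}" using ends2[OF eE(1)] by blast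
    have xy: "x \<noteq> y" using uw eE by (auto simp: doubleton_eq_iff)
    have xV: "x \<in> V" using uw eE by (auto simp: doubleton_eq_iff)
    have "{phi e, phi f} \<subseteq> lst {x,y}" using ef unfolding lst_eb by auto
    then have "card {phi e, phi f} \<le> card (lst {x,y})" using fin_lst card_mono by blast
    then have "2 \<le> card (lst {x,y})" using ef(3) by simp
    then show "{x,y} \<in> Fd" using xy xV y unfolding Fd_def by blast
  qed
  then show ?thesis by (simp add: deg_def delta_dym_def)
qed

lemma degFd: "\<forall>u\<in>V. \<forall>w\<in>V. u \<noteq> w \<longrightarrow> card V + 1 \<le> deg V Fd u + deg V Fd w"
  using degree by (simp add: deg_eq)

lemma deg_le: "x \<in> V \<Longrightarrow> deg V Fd x \<le> card V - 1"
proof -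
  assume x: "x \<in> V"
  have "{w\<in>V. {x,w} \<in> Fd} \<subseteq> V - {x}" using Fd_nosing by auto
  then have "deg V Fd x \<le> card (V - {x})" unfolding deg_def using finV by (meson card_mono finite_Diff)
  then show ?thesis using x finV by simp
qed

lemma n3: "3 \<le> card V"
proof -
  obtain x y where xy: "x \<in> V" "y \<in> V" "x \<noteq> y" using twoV by blast
  have "card V + 1 \<le> deg V Fd x + deg V Fd y" using degFd xy by blast
  moreover have "deg V Fd x \<le> card V - 1" "deg V Fd y \<le> card V - 1" using deg_le xy by auto
  ultimately show ?thesis by linarith
qed

lemma ham: "\<exists>xs. hc V Fd xs"
proof (rule ore[OF finV n3 Fd_nosing])
  show "\<forall>u\<in>V. \<forall>w\<in>V. u \<noteq> w \<longrightarrow> {u,w} \<notin> Fd \<longrightarrow> card V \<le> deg V Fd u + deg V Fd w"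
    using degFd by fastforce
qed

lemma good:
  assumes "distinct xs" "set xs = V"
    "\<forall>i<length xs. col i \<in> lst {xs!i, xs!(Suc i mod length xs)} \<and> col i \<noteq> col (Suc i mod length xs)"
  shows "has_PC_ham_cycle V E ends phi"
proof -
  let ?n = "length xs"
  define fs where "fs = map (\<lambda>i. SOME f. f \<in> edges_between E ends (xs!i) (xs!(Suc i mod ?n)) \<and> phi f = col i) [0..<?n]"
  have f: "fs!i \<in> edges_between E ends (xs!i) (xs!(Suc i mod ?n)) \<and> phi (fs!i) = col i" if i: "i < ?n" for i
  proof -
    define P where "P f \<longleftrightarrow> f \<in> edges_between E ends (xs!i) (xs!(Suc i mod ?n)) \<and> phi f = col i" for f
    have "\<exists>f. P f"
      using assms(3) i unfolding lst_eb P_def by fastforce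
    then have "P (SOME f. P f)" by (rule someI_ex)
    moreover have "fs!i = (SOME f. P f)" using i unfolding fs_def P_def by simp
    ultimately show ?thesis unfolding P_def by simp
  qed
  have "PC_ham_cycle V E ends phi xs fs"
    unfolding PC_ham_cycle_def Let_def
  proof (intro conjI allI impI)
    show "distinct xs" "set xs = V" using assms by auto
    show "length fs = ?n" by (simp add: fs_def)
    fix i assume i: "i < ?n"
    show "fs!i \<in> edges_between E ends (xs!i) (xs!((i+1) mod ?n))" using f[OF i] by simp
    have "0 < ?n" using i by linarith
    then have "Suc i mod ?n < ?n" by simp
    then show "phi (fs!i) \<noteq> phi (fs!((i+1) mod ?n))" using f[OF i] f assms(3) i by simp
  qed
  then show ?thesis unfolding has_PC_ham_cycle_def by blast
qed

lemma Lc_card: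
  assumes "hc V Fd xs" "i < length xs"
  shows "2 \<le> card (lst {xs!i, xs!(Suc i mod length xs)})"
proof -
  have ne: "xs \<noteq> []" using assms by auto
  have "{xs!i, xs!(Suc i mod length xs)} \<in> cedges xs" using assms(2) cedges_nth[OF ne] by blast
  then show ?thesis using assms(1) Fd_card by (auto simp: hc_def)
qed

lemma dich:
  assumes "hc V Fd xs"
  shows "has_PC_ham_cycle V E ends phi \<or>
         (odd (length xs) \<and> (\<exists>A. card A = 2 \<and> (\<forall>p\<in>cedges xs. lst p = A)))"
proof -
  let ?n = "length xs"
  define L where "L i = lst {xs!i, xs!(Suc i mod ?n)}" for i
  have dx: "distinct xs" "set xs = V" using assms by (auto simp: hc_def)
  have nV: "?n = card V" using dx distinct_card by metis
  then have n3': "3 \<le> ?n" using n3 by simp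
  have cL: "\<forall>i<?n. 2 \<le> card (L i)" using Lc_card[OF assms] by (simp add: L_def)
  show ?thesis
  proof (cases "\<exists>i<?n. \<exists>a\<in>L i. 2 \<le> card (L ((i + ?n - 1) mod ?n) - {a})")
    case True
    then obtain i a where ia: "i < ?n" "a \<in> L i" "2 \<le> card (L ((i + ?n - 1) mod ?n) - {a})" by blast
    obtain col where "\<forall>i<?n. col i \<in> L i \<and> col i \<noteq> col (Suc i mod ?n)"
      using greedy_rot[of ?n i a L] n3' ia cL by auto
    then have "has_PC_ham_cycle V E ends phi" using good[OF dx] by (simp add: L_def)
    then show ?thesis by blast
  next
    case False
    have n0: "0 < ?n" using n3' by linarith
    have u: "\<forall>i<?n. L i = L 0 \<and> card (L i) = 2" using uniform[OF n0 cL False] .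
    show ?thesis
    proof (cases "even ?n")
      case True
      have "card (L 0) = 2" using u n0 by blast
      then have "2 \<le> card (L 0)" by simp
      then obtain a b where ab: "a \<in> L 0" "b \<in> L 0" "a \<noteq> b" using two_elems by blast
      obtain col where "\<forall>i<?n. col i \<in> L i \<and> col i \<noteq> col (Suc i mod ?n)"
        using alternate[OF True _ ab(3), of L] u ab by auto
      then have "has_PC_ham_cycle V E ends phi" using good[OF dx] by (simp add: L_def)
      then show ?thesis by blast
    next
      case False
      have ne: "xs \<noteq> []" using n3' by auto
      have "\<forall>p\<in>cedges xs. lst p = L 0"
      proof
        fix p assume "p \<in> cedges xs"
        then obtain i where "i < ?n" "p = {xs!i, xs!(Suc i mod ?n)}" using cedges_nth[OF ne] by blast
        then show "lst p = L 0" using u by (simp add: L_def)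
      qed
      moreover have "card (L 0) = 2" using u n0 by blast
      ultimately show ?thesis using False by blast
    qed
  qed
qed

end



context pcs begin

lemma pred_ne:
  assumes "3 \<le> n" "i0 < (n::nat)"
  shows "(i0 + n - 1) mod n \<noteq> i0" "(i0 + n - 1) mod n < n"
proof -
  show "(i0 + n - 1) mod n < n" using assms by simp
  show "(i0 + n - 1) mod n \<noteq> i0"
  proof (cases i0)
    case 0 then show ?thesis using assms by simp
  next
    case (Suc k)
    then have "i0 + n - 1 = k + n" by simp
    then have "(i0 + n - 1) mod n = k" using assms Suc by simp
    then show ?thesis using Suc by simp
  qed
qed

lemma main:
  assumes three: "\<exists>x\<in>V. card (phi ` incident_edges E ends x) \<ge> 3"
  shows "has_PC_ham_cycle V E ends phi"
proof (rule ccontr)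
  assume nPC: "\<not> has_PC_ham_cycle V E ends phi"
  obtain C where C: "hc V Fd C" using ham by blast
  obtain A where A: "card A = 2" "\<forall>p\<in>cedges C. lst p = A" using dich[OF C] nPC by blast
  have finA: "finite A" using A(1) by (auto intro: card_ge_0_finite)
  have allA: "\<forall>p\<in>Fd. lst p = A"
  proof
    fix p assume p: "p \<in> Fd"
    show "lst p = A"
    proof (rule ccontr)
      assume ne: "lst p \<noteq> A"
      obtain x y where xy: "x \<in> V" "y \<in> V" "x \<noteq> y" "p = {x,y}" using p by (auto simp: Fd_def)
      have pC: "{x,y} \<notin> cedges C" using A ne xy by auto
      obtain C' e where C': "hc V Fd C'" "{x,y} \<in> cedges C'" "e \<in> cedges C" "e \<in> cedges C'"
        using chord[OF finV C order_refl Fd_nosing xy(1,2,3) pC _ degFd] p xy(4) by blast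
      obtain A' where A': "\<forall>q\<in>cedges C'. lst q = A'" using dich[OF C'(1)] nPC by blast
      have "lst p = A'" using A' C'(2) xy(4) by simp
      moreover have "lst e = A'" "lst e = A" using A' C'(3,4) A by auto
      ultimately show False using ne by simp
    qed
  qed
  obtain v where v: "v \<in> V" "3 \<le> card (phi ` incident_edges E ends v)" using three by blast
  have "\<not> (phi ` incident_edges E ends v \<subseteq> A)"
  proof
    assume "phi ` incident_edges E ends v \<subseteq> A"
    then have "card (phi ` incident_edges E ends v) \<le> 2" using card_mono[OF finA] A(1) by metis
    then show False using v by simp
  qed
  then obtain g where g: "g \<in> E" "v \<in> ends g" "phi g \<notin> A" by (auto simp: incident_edges_def)
  obtain u w where uw: "u \<noteq> w" "u \<in> V" "w \<in> V" "ends g = {u,w}" using ends2[OF g(1)] by blast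
  obtain y where y: "y \<in> V" "y \<noteq> v" "ends g = {v,y}"
  proof (cases "v = u")
    case True then show ?thesis using that[of w] uw by simp
  next
    case False then have "v = w" using g(2) uw by auto
    then show ?thesis using that[of u] uw by (auto simp: insert_commute)
  qed
  define p where "p = {v,y}"
  have cg: "phi g \<in> lst p" using g y unfolding lst_def p_def by auto
  have pnF: "p \<notin> Fd" using allA cg g(3) by auto
  have lp: "lst p = {phi g}"
  proof -
    have "d = phi g" if d: "d \<in> lst p" for d
    proof (rule ccontr)
      assume "d \<noteq> phi g"
      then have "card {phi g, d} = 2" by simp
      moreover have "{phi g, d} \<subseteq> lst p" using d cg by auto
      ultimately have "2 \<le> card (lst p)" using fin_lst card_mono by metis
      then have "p \<in> Fd" using v(1) y unfolding Fd_def p_def by blast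
      then show False using pnF by simp
    qed
    then show ?thesis using cg by blast
  qed
  have pC: "{v,y} \<notin> cedges C" using C pnF unfolding hc_def p_def by auto
  obtain C2 where C2: "hc V (insert p Fd) C2" "p \<in> cedges C2"
    using chord[where F="insert p Fd", OF finV C subset_insertI Fd_nosing v(1) y(1) y(2)[symmetric] pC _ degFd]
    unfolding p_def by blast
  let ?n = "length C2"
  have dC2: "distinct C2" "set C2 = V" "cedges C2 \<subseteq> insert p Fd" using C2 by (auto simp: hc_def)
  have nV: "?n = card V" using dC2 distinct_card by metis
  then have n3': "3 \<le> ?n" using n3 by simp
  have ne: "C2 \<noteq> []" using n3' by auto
  obtain i0 where i0: "i0 < ?n" "p = {C2!i0, C2!(Suc i0 mod ?n)}"
    using C2(2) cedges_nth[OF ne] by blast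
  define L where "L i = lst {C2!i, C2!(Suc i mod ?n)}" for i
  have Lj: "L j = A" if j: "j < ?n" "j \<noteq> i0" for j
  proof -
    have ed: "{C2!j, C2!(Suc j mod ?n)} \<in> cedges C2" using j cedges_nth[OF ne] by blast
    have "{C2!j, C2!(Suc j mod ?n)} \<noteq> p"
      using cedge_idx_inj[OF dC2(1) n3' j(1) i0(1)] j(2) i0(2) by auto
    then have "{C2!j, C2!(Suc j mod ?n)} \<in> Fd" using ed dC2(3) by auto
    then show ?thesis using allA by (simp add: L_def)
  qed
  have Li0: "L i0 = {phi g}" using lp i0(2) by (simp add: L_def)
  have cards: "\<forall>j<?n. j \<noteq> i0 \<longrightarrow> 2 \<le> card (L j)" using Lj A(1) by simp
  have pr: "(i0 + ?n - 1) mod ?n \<noteq> i0" "(i0 + ?n - 1) mod ?n < ?n" using pred_ne[OF n3' i0(1)] by auto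
  have "card (L ((i0 + ?n - 1) mod ?n) - {phi g}) = 2" using Lj[OF pr(2) pr(1)] g(3) A(1) by simp
  then obtain col where "\<forall>i<?n. col i \<in> L i \<and> col i \<noteq> col (Suc i mod ?n)"
    using greedy_rot[of ?n i0 "phi g" L] n3' i0(1) Li0 cards by auto
  then have "has_PC_ham_cycle V E ends phi" using good[OF dC2(1,2)] by (simp add: L_def)
  then show False using nPC by simp
qed

end

theorem mainTheorem10:
  fixes V :: "'v set" and E :: "'e set" and ends :: "'e \<Rightarrow> 'v set"
    and c :: nat and phi :: "'e \<Rightarrow> nat"
  assumes G: "colored_multigraph V E ends c phi"
    and two_colors: "\<forall>x\<in>V. \<exists>e\<in>incident_edges E ends x. \<exists>f\<in>incident_edges E ends x. phi e \<noteq> phi f"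
    and three_colors: "\<exists>x\<in>V. card (phi ` incident_edges E ends x) \<ge> 3"
    and degree: "\<forall>x\<in>V. \<forall>y\<in>V. x \<noteq> y \<longrightarrow>
                   delta_dym V E ends phi x + delta_dym V E ends phi y \<ge> card V + 1"
  shows "has_PC_ham_cycle V E ends phi"
proof -
  obtain x where x: "x \<in> V" "3 \<le> card (phi ` incident_edges E ends x)" using three_colors by blast
  then have "incident_edges E ends x \<noteq> {}" by auto
  then obtain g where "g \<in> E" by (auto simp: incident_edges_def)
  then obtain u w where "u \<noteq> w" "u \<in> V" "w \<in> V" using G by (auto simp: colored_multigraph_def)
  then have twoV: "\<exists>x\<in>V. \<exists>y\<in>V. x \<noteq> y" by blast
  interpret pcs V E ends c phi using G degree twoV by unfold_locales
  show ?thesis using main three_colors by blast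
qed


end
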